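(* Let $\mathcal C$ be a pointed category with finite coproducts, $F\colon\mathcal C\to Ab$ a reduced functor and $X\in\mathcal C$. Then $$T_2F(X)=F(X)\Big/\Big\{\big(\nabla^3_*-(\nabla^2r_{12})_*-(\nabla^2r_{13})_*-(\nabla^2r_{23})_*+r_{1*}+r_{2*}+r_{3*}\big)(x)\ :\ x\in F(X\vee X\vee X)\Big\},$$ where $g_*=F(g)$.
   Context: - $\nabla^n\colon X^{\vee n}\to X$ is the folding map. - $r_k\colon X\vee X\vee X\to X$ is the retraction onto the $k$-th summand. - $r_{jk}\colon X\vee X\vee X\to X\vee X$ ($j<k$) maps the $j$-th and $k$-th summands identically onto the first and second summand and the remaining summand to $0$. - For a reduced $F$: $cr_2F(X,Y)=\ker(F(X\vee Y)\to F(X)\oplus F(Y))$ and $cr_3F(X,Y,Z)=cr_2(cr_2F(-,Z))(X,Y)$, a subgroup of $F(X\vee Y\vee Z)$. - $T_2F(X)$ is defined as the cokernel of $cr_3F(X,X,X)\subseteq F(X^{\vee3})\xrightarrow{F(\nabla^3)}F(X)$. *)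

theory Defs
  imports "HOL-Algebra.Coset"
begin

record ('o, 'm) pcat =
  Obj :: "'o set"
  Arr :: "'m set"
  Dom :: "'m \<Rightarrow> 'o"
  Cod :: "'m \<Rightarrow> 'o"
  Idm :: "'o \<Rightarrow> 'm"
  Comp :: "'m \<Rightarrow> 'm \<Rightarrow> 'm"   (* Comp g f = g o f *)
  ZeroObj :: "'o"
  Cop :: "'o \<Rightarrow> 'o \<Rightarrow> 'o"
  In1 :: "'o \<Rightarrow> 'o \<Rightarrow> 'm"
  In2 :: "'o \<Rightarrow> 'o \<Rightarrow> 'm"
  Copair :: "'m \<Rightarrow> 'm \<Rightarrow> 'm"

definition hom_set :: "('o,'m,'x) pcat_scheme \<Rightarrow> 'o \<Rightarrow> 'o \<Rightarrow> 'm set" where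
  "hom_set C A B = {f \<in> Arr C. Dom C f = A \<and> Cod C f = B}"

definition is_category :: "('o,'m,'x) pcat_scheme \<Rightarrow> bool" where
  "is_category C \<longleftrightarrow>
     (\<forall>f \<in> Arr C. Dom C f \<in> Obj C \<and> Cod C f \<in> Obj C) \<and>
     (\<forall>A \<in> Obj C. Idm C A \<in> hom_set C A A) \<and>
     (\<forall>f \<in> Arr C. \<forall>g \<in> Arr C. Cod C f = Dom C g \<longrightarrow>
         Comp C g f \<in> hom_set C (Dom C f) (Cod C g)) \<and>
     (\<forall>f \<in> Arr C. Comp C (Idm C (Cod C f)) f = f \<and> Comp C f (Idm C (Dom C f)) = f) \<and>
     (\<forall>f \<in> Arr C. \<forall>g \<in> Arr C. \<forall>h \<in> Arr C. Cod C f = Dom C g \<longrightarrow> Cod C g = Dom C h \<longrightarrow>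
         Comp C h (Comp C g f) = Comp C (Comp C h g) f)"

text \<open>A pointed category: ZeroObj is a zero object (initial and terminal).
  Finite coproducts: binary coproducts (chosen) plus the initial object ZeroObj.\<close>
definition pointed_cat_fin_coprod :: "('o,'m,'x) pcat_scheme \<Rightarrow> bool" where
  "pointed_cat_fin_coprod C \<longleftrightarrow>
     is_category C \<and>
     ZeroObj C \<in> Obj C \<and>
     (\<forall>A \<in> Obj C. \<exists>!f. f \<in> hom_set C (ZeroObj C) A) \<and>
     (\<forall>A \<in> Obj C. \<exists>!f. f \<in> hom_set C A (ZeroObj C)) \<and>
     (\<forall>A \<in> Obj C. \<forall>B \<in> Obj C.
        Cop C A B \<in> Obj C \<and>
        In1 C A B \<in> hom_set C A (Cop C A B) \<and>
        In2 C A B \<in> hom_set C B (Cop C A B)) \<and>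
     (\<forall>u \<in> Arr C. \<forall>v \<in> Arr C. Cod C u = Cod C v \<longrightarrow>
        Copair C u v \<in> hom_set C (Cop C (Dom C u) (Dom C v)) (Cod C u) \<and>
        Comp C (Copair C u v) (In1 C (Dom C u) (Dom C v)) = u \<and>
        Comp C (Copair C u v) (In2 C (Dom C u) (Dom C v)) = v \<and>
        (\<forall>h \<in> hom_set C (Cop C (Dom C u) (Dom C v)) (Cod C u).
            Comp C h (In1 C (Dom C u) (Dom C v)) = u \<longrightarrow>
            Comp C h (In2 C (Dom C u) (Dom C v)) = v \<longrightarrow> h = Copair C u v))"

definition zmor :: "('o,'m,'x) pcat_scheme \<Rightarrow> 'o \<Rightarrow> 'o \<Rightarrow> 'm" where
  "zmor C A B = Comp C (THE f. f \<in> hom_set C (ZeroObj C) B) (THE f. f \<in> hom_set C A (ZeroObj C))"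

text \<open>A functor C \<rightarrow> Ab: objects go to commutative groups (HOL-Algebra, written
  multiplicatively), morphisms to group homomorphisms.\<close>
definition ab_functor :: "('o,'m,'x) pcat_scheme \<Rightarrow> ('o \<Rightarrow> 'g monoid) \<Rightarrow> ('m \<Rightarrow> 'g \<Rightarrow> 'g) \<Rightarrow> bool" where
  "ab_functor C Fo Fm \<longleftrightarrow>
     (\<forall>A \<in> Obj C. comm_group (Fo A)) \<and>
     (\<forall>f \<in> Arr C. Fm f \<in> hom (Fo (Dom C f)) (Fo (Cod C f))) \<and>
     (\<forall>A \<in> Obj C. \<forall>x \<in> carrier (Fo A). Fm (Idm C A) x = x) \<and>
     (\<forall>f \<in> Arr C. \<forall>g \<in> Arr C. Cod C f = Dom C g \<longrightarrow>
        (\<forall>x \<in> carrier (Fo (Dom C f)). Fm (Comp C g f) x = Fm g (Fm f x)))"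

definition reduced_functor :: "('o,'m,'x) pcat_scheme \<Rightarrow> ('o \<Rightarrow> 'g monoid) \<Rightarrow> ('m \<Rightarrow> 'g \<Rightarrow> 'g) \<Rightarrow> bool" where
  "reduced_functor C Fo Fm \<longleftrightarrow> ab_functor C Fo Fm \<and> carrier (Fo (ZeroObj C)) = {\<one>\<^bsub>Fo (ZeroObj C)\<^esub>}"

definition ret1 :: "('o,'m,'x) pcat_scheme \<Rightarrow> 'o \<Rightarrow> 'o \<Rightarrow> 'm" where
  "ret1 C A B = Copair C (Idm C A) (zmor C B A)"
definition ret2 :: "('o,'m,'x) pcat_scheme \<Rightarrow> 'o \<Rightarrow> 'o \<Rightarrow> 'm" where
  "ret2 C A B = Copair C (zmor C A B) (Idm C B)"

text \<open>cr_2 F(A,B) = ker(F(A \<or> B) \<rightarrow> F(A) \<oplus> F(B)), the map being (F(ret1), F(ret2)).\<close>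
definition cr2 :: "('o,'m,'x) pcat_scheme \<Rightarrow> ('o \<Rightarrow> 'g monoid) \<Rightarrow> ('m \<Rightarrow> 'g \<Rightarrow> 'g) \<Rightarrow> 'o \<Rightarrow> 'o \<Rightarrow> 'g set" where
  "cr2 C Fo Fm A B = {x \<in> carrier (Fo (Cop C A B)).
      Fm (ret1 C A B) x = \<one>\<^bsub>Fo A\<^esub> \<and> Fm (ret2 C A B) x = \<one>\<^bsub>Fo B\<^esub>}"

definition cop_id :: "('o,'m,'x) pcat_scheme \<Rightarrow> 'm \<Rightarrow> 'o \<Rightarrow> 'm" where
  "cop_id C f Z = Copair C (Comp C (In1 C (Cod C f) Z) f) (In2 C (Cod C f) Z)"

text \<open>The functor cr_2 F(-,Z) : A \<mapsto> cr_2 F(A,Z) \<subseteq> F(A \<or> Z), f \<mapsto> F(f \<or> id_Z).\<close>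
definition cr2_obj :: "('o,'m,'x) pcat_scheme \<Rightarrow> ('o \<Rightarrow> 'g monoid) \<Rightarrow> ('m \<Rightarrow> 'g \<Rightarrow> 'g) \<Rightarrow> 'o \<Rightarrow> 'o \<Rightarrow> 'g monoid" where
  "cr2_obj C Fo Fm Z A = (Fo (Cop C A Z)) \<lparr>carrier := cr2 C Fo Fm A Z\<rparr>"
definition cr2_mor :: "('o,'m,'x) pcat_scheme \<Rightarrow> ('m \<Rightarrow> 'g \<Rightarrow> 'g) \<Rightarrow> 'o \<Rightarrow> 'm \<Rightarrow> 'g \<Rightarrow> 'g" where
  "cr2_mor C Fm Z f = Fm (cop_id C f Z)"

definition cr3 :: "('o,'m,'x) pcat_scheme \<Rightarrow> ('o \<Rightarrow> 'g monoid) \<Rightarrow> ('m \<Rightarrow> 'g \<Rightarrow> 'g) \<Rightarrow> 'o \<Rightarrow> 'o \<Rightarrow> 'o \<Rightarrow> 'g set" where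
  "cr3 C Fo Fm X Y Z = cr2 C (cr2_obj C Fo Fm Z) (cr2_mor C Fm Z) X Y"

definition wedge3 :: "('o,'m,'x) pcat_scheme \<Rightarrow> 'o \<Rightarrow> 'o" where
  "wedge3 C X = Cop C (Cop C X X) X"

definition fold2 :: "('o,'m,'x) pcat_scheme \<Rightarrow> 'o \<Rightarrow> 'm" where
  "fold2 C X = Copair C (Idm C X) (Idm C X)"
definition fold3 :: "('o,'m,'x) pcat_scheme \<Rightarrow> 'o \<Rightarrow> 'm" where
  "fold3 C X = Copair C (Copair C (Idm C X) (Idm C X)) (Idm C X)"

definition r1 :: "('o,'m,'x) pcat_scheme \<Rightarrow> 'o \<Rightarrow> 'm" where
  "r1 C X = Copair C (Copair C (Idm C X) (zmor C X X)) (zmor C X X)"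
definition r2 :: "('o,'m,'x) pcat_scheme \<Rightarrow> 'o \<Rightarrow> 'm" where
  "r2 C X = Copair C (Copair C (zmor C X X) (Idm C X)) (zmor C X X)"
definition r3 :: "('o,'m,'x) pcat_scheme \<Rightarrow> 'o \<Rightarrow> 'm" where
  "r3 C X = Copair C (Copair C (zmor C X X) (zmor C X X)) (Idm C X)"

definition r12 :: "('o,'m,'x) pcat_scheme \<Rightarrow> 'o \<Rightarrow> 'm" where
  "r12 C X = Copair C (Copair C (In1 C X X) (In2 C X X)) (zmor C X (Cop C X X))"
definition r13 :: "('o,'m,'x) pcat_scheme \<Rightarrow> 'o \<Rightarrow> 'm" where
  "r13 C X = Copair C (Copair C (In1 C X X) (zmor C X (Cop C X X))) (In2 C X X)"
definition r23 :: "('o,'m,'x) pcat_scheme \<Rightarrow> 'o \<Rightarrow> 'm" where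
  "r23 C X = Copair C (Copair C (zmor C X (Cop C X X)) (In1 C X X)) (In2 C X X)"

text \<open>T_2 F(X) = coker(cr_3 F(X,X,X) \<subseteq> F(X^{\<or>3}) --F(\<nabla>^3)--> F(X)).\<close>
definition T2 :: "('o,'m,'x) pcat_scheme \<Rightarrow> ('o \<Rightarrow> 'g monoid) \<Rightarrow> ('m \<Rightarrow> 'g \<Rightarrow> 'g) \<Rightarrow> 'o \<Rightarrow> 'g set monoid" where
  "T2 C Fo Fm X = Fo X Mod (Fm (fold3 C X) ` cr3 C Fo Fm X X X)"

definition T2_map :: "('o,'m,'x) pcat_scheme \<Rightarrow> ('o \<Rightarrow> 'g monoid) \<Rightarrow> ('m \<Rightarrow> 'g \<Rightarrow> 'g) \<Rightarrow> 'o \<Rightarrow> 'g \<Rightarrow> 'g" where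
  "T2_map C Fo Fm X x =
     Fm (fold3 C X) x
     \<otimes>\<^bsub>Fo X\<^esub> inv\<^bsub>Fo X\<^esub> (Fm (Comp C (fold2 C X) (r12 C X)) x)
     \<otimes>\<^bsub>Fo X\<^esub> inv\<^bsub>Fo X\<^esub> (Fm (Comp C (fold2 C X) (r13 C X)) x)
     \<otimes>\<^bsub>Fo X\<^esub> inv\<^bsub>Fo X\<^esub> (Fm (Comp C (fold2 C X) (r23 C X)) x)
     \<otimes>\<^bsub>Fo X\<^esub> Fm (r1 C X) x
     \<otimes>\<^bsub>Fo X\<^esub> Fm (r2 C X) x
     \<otimes>\<^bsub>Fo X\<^esub> Fm (r3 C X) x"

end

theory Submission
  imports Defs
begin

lemma (in comm_group) g1: "a \<in> carrier G \<Longrightarrow> b \<in> carrier G \<Longrightarrow> c \<in> carrier G \<Longrightarrow>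
  a \<otimes> inv a \<otimes> inv b \<otimes> inv c \<otimes> b \<otimes> c \<otimes> \<one> = \<one>"
proof -
  assume a: "a \<in> carrier G" and b: "b \<in> carrier G" and c: "c \<in> carrier G"
  have "a \<otimes> inv a \<otimes> inv b \<otimes> inv c \<otimes> b \<otimes> c \<otimes> \<one> = (a \<otimes> inv a) \<otimes> ((b \<otimes> inv b) \<otimes> (c \<otimes> inv c))"
    by (simp only: m_ac inv_closed one_closed r_one l_one inv_one m_closed a b c)
  also have "... = \<one>" using a b c by simp
  finally show ?thesis .
qed
lemma (in comm_group) g2: "a \<in> carrier G \<Longrightarrow>
  a \<otimes> inv \<one> \<otimes> inv a \<otimes> inv a \<otimes> \<one> \<otimes> \<one> \<otimes> a = \<one>"
proof -
  assume a: "a \<in> carrier G"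
  have "a \<otimes> inv \<one> \<otimes> inv a \<otimes> inv a \<otimes> \<one> \<otimes> \<one> \<otimes> a = (a \<otimes> inv a) \<otimes> (a \<otimes> inv a)"
    by (simp only: m_ac inv_closed one_closed r_one l_one inv_one m_closed a)
  also have "... = \<one>" using a by simp
  finally show ?thesis .
qed
lemma (in comm_group) g3: "a \<in> carrier G \<Longrightarrow> b \<in> carrier G \<Longrightarrow> c \<in> carrier G \<Longrightarrow>
  a \<otimes> inv b \<otimes> inv a \<otimes> inv c \<otimes> b \<otimes> \<one> \<otimes> c = \<one>"
proof -
  assume a: "a \<in> carrier G" and b: "b \<in> carrier G" and c: "c \<in> carrier G"
  have "a \<otimes> inv b \<otimes> inv a \<otimes> inv c \<otimes> b \<otimes> \<one> \<otimes> c = (a \<otimes> inv a) \<otimes> ((b \<otimes> inv b) \<otimes> (c \<otimes> inv c))"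
    by (simp only: m_ac inv_closed one_closed r_one l_one inv_one m_closed a b c)
  also have "... = \<one>" using a b c by simp
  finally show ?thesis .
qed
lemma (in comm_group) g4: "a \<in> carrier G \<Longrightarrow> b \<in> carrier G \<Longrightarrow> c \<in> carrier G \<Longrightarrow>
  a \<otimes> inv b \<otimes> inv c \<otimes> inv a \<otimes> \<one> \<otimes> b \<otimes> c = \<one>"
proof -
  assume a: "a \<in> carrier G" and b: "b \<in> carrier G" and c: "c \<in> carrier G"
  have "a \<otimes> inv b \<otimes> inv c \<otimes> inv a \<otimes> \<one> \<otimes> b \<otimes> c = (a \<otimes> inv a) \<otimes> ((b \<otimes> inv b) \<otimes> (c \<otimes> inv c))"
    by (simp only: m_ac inv_closed one_closed r_one l_one inv_one m_closed a b c)
  also have "... = \<one>" using a b c by simp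
  finally show ?thesis .
qed
lemma (in comm_group) g5: "a \<in> carrier G \<Longrightarrow> a \<otimes> inv \<one> \<otimes> inv \<one> \<otimes> inv \<one> \<otimes> \<one> \<otimes> \<one> \<otimes> \<one> = a"
  by simp

definition tri :: "('o,'m,'x) pcat_scheme \<Rightarrow> 'm \<Rightarrow> 'm \<Rightarrow> 'm \<Rightarrow> 'm" where
  "tri C a b c = Copair C (Copair C a b) c"

locale pc =
  fixes C :: "('o,'m,'x) pcat_scheme"
  assumes pc: "pointed_cat_fin_coprod C"
begin

abbreviation H where "H \<equiv> hom_set C"

lemma cat: "is_category C" using pc by (simp add: pointed_cat_fin_coprod_def)

lemma hom_objs: "f \<in> H A B \<Longrightarrow> A \<in> Obj C \<and> B \<in> Obj C"
  using cat by (auto simp: is_category_def hom_set_def)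

lemma comp_hom[simp]: "f \<in> H A B \<Longrightarrow> g \<in> H B D \<Longrightarrow> Comp C g f \<in> H A D"
  using cat by (auto simp: is_category_def hom_set_def)

lemma assoc: "f \<in> H A B \<Longrightarrow> g \<in> H B D \<Longrightarrow> h \<in> H D E \<Longrightarrow>
   Comp C h (Comp C g f) = Comp C (Comp C h g) f"
  using cat unfolding is_category_def hom_set_def by auto

lemma id_hom[simp]: "A \<in> Obj C \<Longrightarrow> Idm C A \<in> H A A"
  using cat unfolding is_category_def by auto

lemma id_left[simp]: "f \<in> H A B \<Longrightarrow> Comp C (Idm C B) f = f"
  using cat unfolding is_category_def hom_set_def by auto

lemma id_right[simp]: "f \<in> H A B \<Longrightarrow> Comp C f (Idm C A) = f"
  using cat unfolding is_category_def hom_set_def by auto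

lemma zero_obj[simp]: "ZeroObj C \<in> Obj C"
  using pc by (simp add: pointed_cat_fin_coprod_def)

lemma cop_obj[simp]: "A \<in> Obj C \<Longrightarrow> B \<in> Obj C \<Longrightarrow> Cop C A B \<in> Obj C"
  using pc by (simp add: pointed_cat_fin_coprod_def)

lemma in1_hom[simp]: "A \<in> Obj C \<Longrightarrow> B \<in> Obj C \<Longrightarrow> In1 C A B \<in> H A (Cop C A B)"
  using pc by (simp add: pointed_cat_fin_coprod_def)

lemma in2_hom[simp]: "A \<in> Obj C \<Longrightarrow> B \<in> Obj C \<Longrightarrow> In2 C A B \<in> H B (Cop C A B)"
  using pc by (simp add: pointed_cat_fin_coprod_def)

lemma copair_all: "u \<in> H A V \<Longrightarrow> v \<in> H B V \<Longrightarrow>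
   Copair C u v \<in> H (Cop C A B) V \<and> Comp C (Copair C u v) (In1 C A B) = u \<and>
   Comp C (Copair C u v) (In2 C A B) = v \<and>
   (\<forall>h \<in> H (Cop C A B) V. Comp C h (In1 C A B) = u \<longrightarrow> Comp C h (In2 C A B) = v \<longrightarrow> h = Copair C u v)"
proof -
  assume u: "u \<in> H A V" and v: "v \<in> H B V"
  have "\<forall>u \<in> Arr C. \<forall>v \<in> Arr C. Cod C u = Cod C v \<longrightarrow>
        Copair C u v \<in> hom_set C (Cop C (Dom C u) (Dom C v)) (Cod C u) \<and>
        Comp C (Copair C u v) (In1 C (Dom C u) (Dom C v)) = u \<and>
        Comp C (Copair C u v) (In2 C (Dom C u) (Dom C v)) = v \<and>
        (\<forall>h \<in> hom_set C (Cop C (Dom C u) (Dom C v)) (Cod C u).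
            Comp C h (In1 C (Dom C u) (Dom C v)) = u \<longrightarrow>
            Comp C h (In2 C (Dom C u) (Dom C v)) = v \<longrightarrow> h = Copair C u v)"
    using pc unfolding pointed_cat_fin_coprod_def by blast
  moreover have "u \<in> Arr C" "v \<in> Arr C" "Cod C u = Cod C v" "Dom C u = A" "Dom C v = B" "Cod C u = V"
    using u v by (auto simp: hom_set_def)
  ultimately show ?thesis by metis
qed

lemma copair_hom[simp]: "u \<in> H A V \<Longrightarrow> v \<in> H B V \<Longrightarrow> Copair C u v \<in> H (Cop C A B) V"
  using copair_all by blast
lemma copair_in1[simp]: "u \<in> H A V \<Longrightarrow> v \<in> H B V \<Longrightarrow> Comp C (Copair C u v) (In1 C A B) = u"
  using copair_all by blast
lemma copair_in2[simp]: "u \<in> H A V \<Longrightarrow> v \<in> H B V \<Longrightarrow> Comp C (Copair C u v) (In2 C A B) = v"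
  using copair_all by blast
lemma copair_unique: "u \<in> H A V \<Longrightarrow> v \<in> H B V \<Longrightarrow> h \<in> H (Cop C A B) V \<Longrightarrow>
   Comp C h (In1 C A B) = u \<Longrightarrow> Comp C h (In2 C A B) = v \<Longrightarrow> h = Copair C u v"
  using copair_all by blast

lemma comp_in1_hom[simp]: "h \<in> H (Cop C A B) V \<Longrightarrow> A \<in> Obj C \<Longrightarrow> B \<in> Obj C \<Longrightarrow> Comp C h (In1 C A B) \<in> H A V"
  by (rule comp_hom[OF in1_hom]) auto
lemma comp_in2_hom[simp]: "h \<in> H (Cop C A B) V \<Longrightarrow> A \<in> Obj C \<Longrightarrow> B \<in> Obj C \<Longrightarrow> Comp C h (In2 C A B) \<in> H B V"
  by (rule comp_hom[OF in2_hom]) auto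

definition ini where "ini A = (THE f. f \<in> H (ZeroObj C) A)"
definition ter where "ter A = (THE f. f \<in> H A (ZeroObj C))"

lemma ini: "A \<in> Obj C \<Longrightarrow> ini A \<in> H (ZeroObj C) A \<and> (\<forall>f \<in> H (ZeroObj C) A. f = ini A)"
proof -
  assume A: "A \<in> Obj C"
  then have "\<exists>!f. f \<in> H (ZeroObj C) A" using pc unfolding pointed_cat_fin_coprod_def by blast
  then show ?thesis unfolding ini_def by (metis (no_types, lifting) theI_unique)
qed

lemma ter: "A \<in> Obj C \<Longrightarrow> ter A \<in> H A (ZeroObj C) \<and> (\<forall>f \<in> H A (ZeroObj C). f = ter A)"
proof -
  assume A: "A \<in> Obj C"
  then have "\<exists>!f. f \<in> H A (ZeroObj C)" using pc unfolding pointed_cat_fin_coprod_def by blast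
  then show ?thesis unfolding ter_def by (metis (no_types, lifting) theI_unique)
qed

lemma zmor_eq: "zmor C A B = Comp C (ini B) (ter A)"
  unfolding zmor_def ini_def ter_def by simp

lemma zmor_hom[simp]: "A \<in> Obj C \<Longrightarrow> B \<in> Obj C \<Longrightarrow> zmor C A B \<in> H A B"
  unfolding zmor_eq using ini ter comp_hom by blast

lemma zmor_left[simp]: "f \<in> H B D \<Longrightarrow> A \<in> Obj C \<Longrightarrow> Comp C f (zmor C A B) = zmor C A D"
proof -
  assume f: "f \<in> H B D" and A: "A \<in> Obj C"
  have B: "B \<in> Obj C" and D: "D \<in> Obj C" using hom_objs[OF f] by auto
  have "Comp C f (zmor C A B) = Comp C (Comp C f (ini B)) (ter A)"
    unfolding zmor_eq using assoc[OF _ _ f] ini[OF B] ter[OF A] by blast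
  also have "Comp C f (ini B) = ini D" using ini[OF D] ini[OF B] f comp_hom by blast
  finally show ?thesis by (simp add: zmor_eq)
qed

lemma zmor_right[simp]: "f \<in> H A B \<Longrightarrow> D \<in> Obj C \<Longrightarrow> Comp C (zmor C B D) f = zmor C A D"
proof -
  assume f: "f \<in> H A B" and D: "D \<in> Obj C"
  have A: "A \<in> Obj C" and B: "B \<in> Obj C" using hom_objs[OF f] by auto
  have "Comp C (zmor C B D) f = Comp C (ini D) (Comp C (ter B) f)"
    unfolding zmor_eq using assoc[OF f] ini[OF D] ter[OF B] by metis
  also have "Comp C (ter B) f = ter A" using ter[OF A] ter[OF B] f comp_hom by blast
  finally show ?thesis by (simp add: zmor_eq)
qed

lemma comp_copair: "u \<in> H A V \<Longrightarrow> v \<in> H B V \<Longrightarrow> h \<in> H V E \<Longrightarrow>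
   Comp C h (Copair C u v) = Copair C (Comp C h u) (Comp C h v)"
proof -
  assume u: "u \<in> H A V" and v: "v \<in> H B V" and h: "h \<in> H V E"
  have A: "A \<in> Obj C" and B: "B \<in> Obj C" using hom_objs u v by auto
  have cp: "Copair C u v \<in> H (Cop C A B) V" using u v by simp
  show ?thesis
  proof (rule copair_unique[of _ A E _ B])
    show "Comp C h (Copair C u v) \<in> H (Cop C A B) E" using cp h by simp
    show "Comp C (Comp C h (Copair C u v)) (In1 C A B) = Comp C h u"
      using assoc[OF in1_hom[OF A B] cp h] u v by simp
    show "Comp C (Comp C h (Copair C u v)) (In2 C A B) = Comp C h v"
      using assoc[OF in2_hom[OF A B] cp h] u v by simp
  qed (use u v h in auto)
qed

lemma copair_in_id: "A \<in> Obj C \<Longrightarrow> B \<in> Obj C \<Longrightarrow> Copair C (In1 C A B) (In2 C A B) = Idm C (Cop C A B)"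
  by (rule copair_unique[symmetric, of _ A "Cop C A B" _ B]) (auto simp: id_left[OF in1_hom] id_left[OF in2_hom])

lemma copair_zmor: "A \<in> Obj C \<Longrightarrow> B \<in> Obj C \<Longrightarrow> V \<in> Obj C \<Longrightarrow>
   Copair C (zmor C A V) (zmor C B V) = zmor C (Cop C A B) V"
  by (rule copair_unique[symmetric, of _ A V _ B]) auto

end

locale pcx = pc C for C :: "('o,'m,'x) pcat_scheme" +
  fixes X :: 'o
  assumes X[simp]: "X \<in> Obj C"
begin

abbreviation "XX \<equiv> Cop C X X"
abbreviation "W \<equiv> Cop C XX X"
abbreviation "j1 \<equiv> Comp C (In1 C XX X) (In1 C X X)"
abbreviation "j2 \<equiv> Comp C (In1 C XX X) (In2 C X X)"
abbreviation "j3 \<equiv> In2 C XX X"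

lemma j_hom[simp]: "j1 \<in> H X W" "j2 \<in> H X W" "j3 \<in> H X W"
  by (blast intro: comp_hom in1_hom in2_hom cop_obj X)+

lemma hj_hom[simp]: "h \<in> H W V \<Longrightarrow> Comp C h j1 \<in> H X V"
  "h \<in> H W V \<Longrightarrow> Comp C h j2 \<in> H X V" "h \<in> H W V \<Longrightarrow> Comp C h j3 \<in> H X V"
  apply (rule comp_hom[OF j_hom(1)], simp)
  apply (rule comp_hom[OF j_hom(2)], simp)
  by simp

lemma tri_hom[simp]: "a \<in> H X V \<Longrightarrow> b \<in> H X V \<Longrightarrow> c \<in> H X V \<Longrightarrow> tri C a b c \<in> H W V"
  unfolding tri_def by simp

lemma tri_j[simp]:
  assumes "a \<in> H X V" "b \<in> H X V" "c \<in> H X V"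
  shows "Comp C (tri C a b c) j1 = a" "Comp C (tri C a b c) j2 = b" "Comp C (tri C a b c) j3 = c"
proof -
  have t: "tri C a b c \<in> H W V" using assms by simp
  have cp: "Copair C a b \<in> H XX V" using assms by simp
  show "Comp C (tri C a b c) j1 = a"
    using assoc[OF in1_hom[OF X X] in1_hom[OF cop_obj[OF X X] X] t] assms cp
    by (simp add: tri_def)
  show "Comp C (tri C a b c) j2 = b"
    using assoc[OF in2_hom[OF X X] in1_hom[OF cop_obj[OF X X] X] t] assms cp
    by (simp add: tri_def)
  show "Comp C (tri C a b c) j3 = c" using copair_in2[OF cp assms(3)] by (simp add: tri_def)
qed

lemma tri_unique: "h \<in> H W V \<Longrightarrow> h = tri C (Comp C h j1) (Comp C h j2) (Comp C h j3)"
proof -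
  assume h: "h \<in> H W V"
  have V: "V \<in> Obj C" using hom_objs[OF h] by auto
  define h1 where "h1 = Comp C h (In1 C XX X)"
  have h1: "h1 \<in> H XX V" unfolding h1_def by (rule comp_hom[OF in1_hom[OF cop_obj[OF X X] X] h])
  have e1: "h1 = Copair C (Comp C h1 (In1 C X X)) (Comp C h1 (In2 C X X))"
    by (rule copair_unique[of _ X V _ X]) (use h1 comp_hom[OF in1_hom[OF X X] h1] comp_hom[OF in2_hom[OF X X] h1] in auto)
  have e: "h = Copair C h1 (Comp C h j3)"
    by (rule copair_unique[of _ XX V _ X]) (use h1 h in \<open>auto simp: h1_def\<close>)
  have "Comp C h1 (In1 C X X) = Comp C h j1" "Comp C h1 (In2 C X X) = Comp C h j2"
    unfolding h1_def using assoc[OF in1_hom[OF X X] in1_hom[OF cop_obj[OF X X] X] h]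
      assoc[OF in2_hom[OF X X] in1_hom[OF cop_obj[OF X X] X] h] by auto
  with e e1 show ?thesis unfolding tri_def by metis
qed

lemma comp_tri: "g \<in> H V E \<Longrightarrow> a \<in> H X V \<Longrightarrow> b \<in> H X V \<Longrightarrow> c \<in> H X V \<Longrightarrow>
   Comp C g (tri C a b c) = tri C (Comp C g a) (Comp C g b) (Comp C g c)"
  unfolding tri_def
  by (subst comp_copair[of _ XX V _ X], simp, simp, simp, subst comp_copair[of _ X V _ X], auto)

lemma tri_zero: "V \<in> Obj C \<Longrightarrow> tri C (zmor C X V) (zmor C X V) (zmor C X V) = zmor C W V"
  unfolding tri_def by (simp add: copair_zmor)

lemma tri_eqI: "h \<in> H W V \<Longrightarrow> a \<in> H X V \<Longrightarrow> b \<in> H X V \<Longrightarrow> c \<in> H X V \<Longrightarrow>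
  Comp C h j1 = a \<Longrightarrow> Comp C h j2 = b \<Longrightarrow> Comp C h j3 = c \<Longrightarrow> h = tri C a b c"
  using tri_unique by metis

end

context pcx begin
abbreviation "I \<equiv> Idm C X"
abbreviation "i1 \<equiv> In1 C X X"
abbreviation "i2 \<equiv> In2 C X X"
abbreviation "zX \<equiv> zmor C X X"
abbreviation "zXX \<equiv> zmor C X XX"

lemma defs_tri: "fold3 C X = tri C I I I" "r1 C X = tri C I zX zX" "r2 C X = tri C zX I zX"
  "r3 C X = tri C zX zX I" "r12 C X = tri C i1 i2 zXX" "r13 C X = tri C i1 zXX i2"
  "r23 C X = tri C zXX i1 i2"
  by (simp_all add: fold3_def r1_def r2_def r3_def r12_def r13_def r23_def tri_def)

lemma m1: "ret1 C XX X = r12 C X"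
  unfolding ret1_def r12_def by (simp add: copair_in_id)
lemma m2: "ret2 C XX X = r3 C X"
  unfolding ret2_def r3_def by (simp add: copair_zmor)

lemma ret_hom: "ret1 C X X \<in> H XX X" "ret2 C X X \<in> H XX X"
  unfolding ret1_def ret2_def by simp_all

lemma m3: "cop_id C (ret1 C X X) X = r13 C X"
proof -
  have "Cod C (ret1 C X X) = X" using ret_hom by (simp add: hom_set_def)
  moreover have "Comp C i1 (ret1 C X X) = Copair C i1 zXX"
    unfolding ret1_def by (subst comp_copair[of _ X X _ X _ XX]) (auto simp: id_right[OF in1_hom[OF X X]] zmor_left[OF in1_hom[OF X X] X])
  ultimately show ?thesis unfolding cop_id_def r13_def by simp
qed

lemma m4: "cop_id C (ret2 C X X) X = r23 C X"
proof -
  have "Cod C (ret2 C X X) = X" using ret_hom by (simp add: hom_set_def)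
  moreover have "Comp C i1 (ret2 C X X) = Copair C zXX i1"
    unfolding ret2_def by (subst comp_copair[of _ X X _ X _ XX]) (auto simp: id_right[OF in1_hom[OF X X]] zmor_left[OF in1_hom[OF X X] X])
  ultimately show ?thesis unfolding cop_id_def r23_def by simp
qed

lemma ctri2: "g \<in> H V E \<Longrightarrow> a \<in> H X V \<Longrightarrow> b \<in> H X V \<Longrightarrow> c \<in> H X V \<Longrightarrow>
   Comp C g (tri C a b c) = tri C (Comp C g a) (Comp C g b) (Comp C g c)"
  by (rule comp_tri)

lemma m5: "Comp C (ret1 C X X) (r12 C X) = r1 C X"
  unfolding defs_tri
  using ctri2[OF ret_hom(1), of i1 i2 zXX] copair_in1[of I X X zX X] copair_in2[of I X X zX X]
  by (simp add: ret1_def zmor_left[OF ret_hom(1)[unfolded ret1_def] X])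

lemma m6: "Comp C (ret2 C X X) (r12 C X) = r2 C X"
  unfolding defs_tri
  using ctri2[OF ret_hom(2), of i1 i2 zXX] copair_in1[of zX X X I X] copair_in2[of zX X X I X]
  by (simp add: ret2_def zmor_left[OF ret_hom(2)[unfolded ret2_def] X])

lemma fold2_hom: "fold2 C X \<in> H XX X" unfolding fold2_def by simp

lemma m7: "Comp C (fold2 C X) (r12 C X) = tri C I I zX"
  "Comp C (fold2 C X) (r13 C X) = tri C I zX I"
  "Comp C (fold2 C X) (r23 C X) = tri C zX I I"
  unfolding defs_tri
  using ctri2[OF fold2_hom, of i1 i2 zXX] ctri2[OF fold2_hom, of i1 zXX i2] ctri2[OF fold2_hom, of zXX i1 i2]
    copair_in1[of I X X I X] copair_in2[of I X X I X]
  by (simp_all add: fold2_def zmor_left[OF fold2_hom[unfolded fold2_def] X])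
end

locale pfx = pcx C X for C :: "('o,'m,'x) pcat_scheme" and X :: 'o +
  fixes Fo :: "'o \<Rightarrow> 'g monoid" and Fm :: "'m \<Rightarrow> 'g \<Rightarrow> 'g"
  assumes red: "reduced_functor C Fo Fm"
begin

lemma grp[simp]: "A \<in> Obj C \<Longrightarrow> comm_group (Fo A)"
  using red by (simp add: reduced_functor_def ab_functor_def)

lemma grp'[simp]: "A \<in> Obj C \<Longrightarrow> group (Fo A)"
  using grp comm_group.axioms(2) by blast

lemma Fhom: "f \<in> H A B \<Longrightarrow> Fm f \<in> hom (Fo A) (Fo B)"
  using red by (auto simp: reduced_functor_def ab_functor_def hom_set_def)

lemma gh: "f \<in> H A B \<Longrightarrow> group_hom (Fo A) (Fo B) (Fm f)"
  using Fhom hom_objs by (simp add: group_hom_def group_hom_axioms_def)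

lemma Fcomp: "f \<in> H A B \<Longrightarrow> g \<in> H B D \<Longrightarrow> x \<in> carrier (Fo A) \<Longrightarrow> Fm (Comp C g f) x = Fm g (Fm f x)"
  using red unfolding reduced_functor_def ab_functor_def hom_set_def by auto

lemma Fclosed: "f \<in> H A B \<Longrightarrow> x \<in> carrier (Fo A) \<Longrightarrow> Fm f x \<in> carrier (Fo B)"
  using Fhom by (auto simp: hom_def)

lemma Fone: "f \<in> H A B \<Longrightarrow> Fm f \<one>\<^bsub>Fo A\<^esub> = \<one>\<^bsub>Fo B\<^esub>"
  using gh group_hom.hom_one by blast

lemma Fzero: "A \<in> Obj C \<Longrightarrow> B \<in> Obj C \<Longrightarrow> x \<in> carrier (Fo A) \<Longrightarrow> Fm (zmor C A B) x = \<one>\<^bsub>Fo B\<^esub>"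
proof -
  assume A: "A \<in> Obj C" and B: "B \<in> Obj C" and x: "x \<in> carrier (Fo A)"
  have t: "ter A \<in> H A (ZeroObj C)" and i: "ini B \<in> H (ZeroObj C) B" using ter[OF A] ini[OF B] by auto
  have "Fm (ter A) x \<in> carrier (Fo (ZeroObj C))" using Fclosed[OF t x] .
  then have "Fm (ter A) x = \<one>\<^bsub>Fo (ZeroObj C)\<^esub>" using red by (simp add: reduced_functor_def)
  then show ?thesis unfolding zmor_eq using Fcomp[OF t i x] Fone[OF i] by simp
qed

abbreviation "zW \<equiv> zmor C X W"
abbreviation "e12 \<equiv> tri C j1 j2 zW"
abbreviation "e13 \<equiv> tri C j1 zW j3"
abbreviation "e23 \<equiv> tri C zW j2 j3"
abbreviation "e1 \<equiv> tri C j1 zW zW"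
abbreviation "e2 \<equiv> tri C zW j2 zW"
abbreviation "e3 \<equiv> tri C zW zW j3"

definition pp where
  "pp x = x \<otimes>\<^bsub>Fo W\<^esub> inv\<^bsub>Fo W\<^esub> (Fm e12 x) \<otimes>\<^bsub>Fo W\<^esub> inv\<^bsub>Fo W\<^esub> (Fm e13 x)
     \<otimes>\<^bsub>Fo W\<^esub> inv\<^bsub>Fo W\<^esub> (Fm e23 x) \<otimes>\<^bsub>Fo W\<^esub> Fm e1 x \<otimes>\<^bsub>Fo W\<^esub> Fm e2 x \<otimes>\<^bsub>Fo W\<^esub> Fm e3 x"

lemma e_hom: "e12 \<in> H W W" "e13 \<in> H W W" "e23 \<in> H W W" "e1 \<in> H W W" "e2 \<in> H W W" "e3 \<in> H W W"
  by simp_all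

lemma pp_closed: "x \<in> carrier (Fo W) \<Longrightarrow> pp x \<in> carrier (Fo W)"
  unfolding pp_def using Fclosed[OF e_hom(1)] Fclosed[OF e_hom(2)] Fclosed[OF e_hom(3)]
    Fclosed[OF e_hom(4)] Fclosed[OF e_hom(5)] Fclosed[OF e_hom(6)]
  by (simp add: group.inv_closed[OF grp'] monoid.m_closed[OF group.is_monoid[OF grp']])

lemma ctri:
  assumes "g1 \<in> H X V" "g2 \<in> H X V" "g3 \<in> H X V" "a \<in> H X W" "b \<in> H X W" "c \<in> H X W"
  shows "Comp C (tri C g1 g2 g3) (tri C a b c) =
    tri C (Comp C (tri C g1 g2 g3) a) (Comp C (tri C g1 g2 g3) b) (Comp C (tri C g1 g2 g3) c)"
  by (rule comp_tri[of _ W V]) (use assms in auto)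

lemma pp_generic:
  assumes g: "g1 \<in> H X V" "g2 \<in> H X V" "g3 \<in> H X V" and x: "x \<in> carrier (Fo W)"
  shows "Fm (tri C g1 g2 g3) (pp x) =
     Fm (tri C g1 g2 g3) x
     \<otimes>\<^bsub>Fo V\<^esub> inv\<^bsub>Fo V\<^esub> (Fm (tri C g1 g2 (zmor C X V)) x)
     \<otimes>\<^bsub>Fo V\<^esub> inv\<^bsub>Fo V\<^esub> (Fm (tri C g1 (zmor C X V) g3) x)
     \<otimes>\<^bsub>Fo V\<^esub> inv\<^bsub>Fo V\<^esub> (Fm (tri C (zmor C X V) g2 g3) x)
     \<otimes>\<^bsub>Fo V\<^esub> Fm (tri C g1 (zmor C X V) (zmor C X V)) x
     \<otimes>\<^bsub>Fo V\<^esub> Fm (tri C (zmor C X V) g2 (zmor C X V)) x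
     \<otimes>\<^bsub>Fo V\<^esub> Fm (tri C (zmor C X V) (zmor C X V) g3) x"
proof -
  let ?g = "tri C g1 g2 g3"
  have V: "V \<in> Obj C" using hom_objs g(1) by auto
  have gH: "?g \<in> H W V" using g by simp
  note GH = gh[OF gH]
  have cl: "Fm e12 x \<in> carrier (Fo W)" "Fm e13 x \<in> carrier (Fo W)" "Fm e23 x \<in> carrier (Fo W)"
    "Fm e1 x \<in> carrier (Fo W)" "Fm e2 x \<in> carrier (Fo W)" "Fm e3 x \<in> carrier (Fo W)"
    using Fclosed[OF e_hom(1) x] Fclosed[OF e_hom(2) x] Fclosed[OF e_hom(3) x]
    Fclosed[OF e_hom(4) x] Fclosed[OF e_hom(5) x] Fclosed[OF e_hom(6) x] by auto
  have z: "Comp C ?g zW = zmor C X V" using zmor_left[OF gH] by simp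
  have j: "Comp C ?g j1 = g1" "Comp C ?g j2 = g2" "Comp C ?g j3 = g3" using tri_j g by auto
  have c: "Comp C ?g e12 = tri C g1 g2 (zmor C X V)" "Comp C ?g e13 = tri C g1 (zmor C X V) g3"
     "Comp C ?g e23 = tri C (zmor C X V) g2 g3" "Comp C ?g e1 = tri C g1 (zmor C X V) (zmor C X V)"
     "Comp C ?g e2 = tri C (zmor C X V) g2 (zmor C X V)" "Comp C ?g e3 = tri C (zmor C X V) (zmor C X V) g3"
    by (simp_all add: ctri[OF g] z j)
  have f: "Fm ?g (Fm e12 x) = Fm (tri C g1 g2 (zmor C X V)) x"
     "Fm ?g (Fm e13 x) = Fm (tri C g1 (zmor C X V) g3) x"
     "Fm ?g (Fm e23 x) = Fm (tri C (zmor C X V) g2 g3) x"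
     "Fm ?g (Fm e1 x) = Fm (tri C g1 (zmor C X V) (zmor C X V)) x"
     "Fm ?g (Fm e2 x) = Fm (tri C (zmor C X V) g2 (zmor C X V)) x"
     "Fm ?g (Fm e3 x) = Fm (tri C (zmor C X V) (zmor C X V) g3) x"
    using Fcomp[OF e_hom(1) gH x] Fcomp[OF e_hom(2) gH x] Fcomp[OF e_hom(3) gH x]
      Fcomp[OF e_hom(4) gH x] Fcomp[OF e_hom(5) gH x] Fcomp[OF e_hom(6) gH x] c by auto
  show ?thesis unfolding pp_def
    by (simp add: x cl group_hom.hom_mult[OF GH] group_hom.hom_inv[OF GH] f
       group.inv_closed[OF grp'] monoid.m_closed[OF group.is_monoid[OF grp']])
qed

end

context pfx begin

lemma tri_Fclosed[simp]: "a \<in> H X V \<Longrightarrow> b \<in> H X V \<Longrightarrow> c \<in> H X V \<Longrightarrow> x \<in> carrier (Fo W) \<Longrightarrow>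
   Fm (tri C a b c) x \<in> carrier (Fo V)"
  by (rule Fclosed[OF tri_hom])

lemma Fz: "V \<in> Obj C \<Longrightarrow> x \<in> carrier (Fo W) \<Longrightarrow>
   Fm (tri C (zmor C X V) (zmor C X V) (zmor C X V)) x = \<one>\<^bsub>Fo V\<^esub>"
  by (simp add: tri_zero Fzero)

lemma r_homs: "r12 C X \<in> H W XX" "r13 C X \<in> H W XX" "r23 C X \<in> H W XX"
  "r1 C X \<in> H W X" "r2 C X \<in> H W X" "r3 C X \<in> H W X" "fold3 C X \<in> H W X"
  unfolding defs_tri by simp_all

lemma cr3_char: "y \<in> cr3 C Fo Fm X X X \<longleftrightarrow> y \<in> carrier (Fo W) \<and>
   Fm (r12 C X) y = \<one>\<^bsub>Fo XX\<^esub> \<and> Fm (r3 C X) y = \<one>\<^bsub>Fo X\<^esub> \<and>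
   Fm (r13 C X) y = \<one>\<^bsub>Fo XX\<^esub> \<and> Fm (r23 C X) y = \<one>\<^bsub>Fo XX\<^esub>"
  unfolding cr3_def cr2_def cr2_obj_def cr2_mor_def by (auto simp: m1 m2 m3 m4)

lemma dirA:
  assumes y: "y \<in> cr3 C Fo Fm X X X"
  shows "T2_map C Fo Fm X y = Fm (fold3 C X) y"
proof -
  have yc: "y \<in> carrier (Fo W)" and y12: "Fm (r12 C X) y = \<one>\<^bsub>Fo XX\<^esub>"
    and y3: "Fm (r3 C X) y = \<one>\<^bsub>Fo X\<^esub>" and y13: "Fm (r13 C X) y = \<one>\<^bsub>Fo XX\<^esub>"
    and y23: "Fm (r23 C X) y = \<one>\<^bsub>Fo XX\<^esub>" using y cr3_char by auto
  have a: "Fm (Comp C (fold2 C X) (r12 C X)) y = \<one>\<^bsub>Fo X\<^esub>"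
    using Fcomp[OF r_homs(1) fold2_hom yc] y12 Fone[OF fold2_hom] by simp
  have b: "Fm (Comp C (fold2 C X) (r13 C X)) y = \<one>\<^bsub>Fo X\<^esub>"
    using Fcomp[OF r_homs(2) fold2_hom yc] y13 Fone[OF fold2_hom] by simp
  have c: "Fm (Comp C (fold2 C X) (r23 C X)) y = \<one>\<^bsub>Fo X\<^esub>"
    using Fcomp[OF r_homs(3) fold2_hom yc] y23 Fone[OF fold2_hom] by simp
  have d: "Fm (r1 C X) y = \<one>\<^bsub>Fo X\<^esub>"
    using Fcomp[OF r_homs(1) ret_hom(1) yc] y12 Fone[OF ret_hom(1)] m5 by simp
  have e: "Fm (r2 C X) y = \<one>\<^bsub>Fo X\<^esub>"
    using Fcomp[OF r_homs(1) ret_hom(2) yc] y12 Fone[OF ret_hom(2)] m6 by simp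
  show ?thesis unfolding T2_map_def a b c d e y3
    by (rule comm_group.g5[OF grp[OF X] Fclosed[OF r_homs(7) yc]])
qed

lemma dirB:
  assumes x: "x \<in> carrier (Fo W)"
  shows "pp x \<in> cr3 C Fo Fm X X X" "Fm (fold3 C X) (pp x) = T2_map C Fo Fm X x"
proof -
  have XX: "XX \<in> Obj C" by simp
  have h: "i1 \<in> H X XX" "i2 \<in> H X XX" "zXX \<in> H X XX" "I \<in> H X X" "zX \<in> H X X"
    by simp_all
  have "Fm (r12 C X) (pp x) = \<one>\<^bsub>Fo XX\<^esub>"
    unfolding defs_tri
    apply (simp only: pp_generic[OF h(1) h(2) h(3) x] Fz[OF XX x])
    apply (rule comm_group.g1[OF grp[OF XX]])
    using x by simp_all
  moreover have "Fm (r3 C X) (pp x) = \<one>\<^bsub>Fo X\<^esub>"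
    unfolding defs_tri
    apply (simp only: pp_generic[OF h(5) h(5) h(4) x] Fz[OF X x])
    apply (rule comm_group.g2[OF grp[OF X]])
    using x by simp_all
  moreover have "Fm (r13 C X) (pp x) = \<one>\<^bsub>Fo XX\<^esub>"
    unfolding defs_tri
    apply (simp only: pp_generic[OF h(1) h(3) h(2) x] Fz[OF XX x])
    apply (rule comm_group.g3[OF grp[OF XX]])
    using x by simp_all
  moreover have "Fm (r23 C X) (pp x) = \<one>\<^bsub>Fo XX\<^esub>"
    unfolding defs_tri
    apply (simp only: pp_generic[OF h(3) h(1) h(2) x] Fz[OF XX x])
    apply (rule comm_group.g4[OF grp[OF XX]])
    using x by simp_all
  ultimately show "pp x \<in> cr3 C Fo Fm X X X" using cr3_char pp_closed[OF x] by blast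
  show "Fm (fold3 C X) (pp x) = T2_map C Fo Fm X x"
    unfolding T2_map_def m7 unfolding defs_tri pp_generic[OF h(4) h(4) h(4) x] ..
qed

lemma sets_eq: "Fm (fold3 C X) ` cr3 C Fo Fm X X X = T2_map C Fo Fm X ` carrier (Fo W)"
proof
  show "Fm (fold3 C X) ` cr3 C Fo Fm X X X \<subseteq> T2_map C Fo Fm X ` carrier (Fo W)"
  proof
    fix z assume "z \<in> Fm (fold3 C X) ` cr3 C Fo Fm X X X"
    then obtain y where y: "y \<in> cr3 C Fo Fm X X X" and z: "z = Fm (fold3 C X) y" by blast
    have "y \<in> carrier (Fo W)" using y cr3_char by blast
    then show "z \<in> T2_map C Fo Fm X ` carrier (Fo W)" using dirA[OF y] z by (metis image_eqI)
  qed
  show "T2_map C Fo Fm X ` carrier (Fo W) \<subseteq> Fm (fold3 C X) ` cr3 C Fo Fm X X X"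
  proof
    fix z assume "z \<in> T2_map C Fo Fm X ` carrier (Fo W)"
    then obtain x where x: "x \<in> carrier (Fo W)" and z: "z = T2_map C Fo Fm X x" by blast
    show "z \<in> Fm (fold3 C X) ` cr3 C Fo Fm X X X" using dirB[OF x] z by (metis image_eqI)
  qed
qed

end

theorem proposition2p17:
  fixes C :: "('o, 'm, 'x) pcat_scheme"
    and Fo :: "'o \<Rightarrow> 'g monoid" and Fm :: "'m \<Rightarrow> 'g \<Rightarrow> 'g"
    and X :: 'o
  assumes "pointed_cat_fin_coprod C"
    and "reduced_functor C Fo Fm"
    and "X \<in> Obj C"
  shows "T2 C Fo Fm X = Fo X Mod (T2_map C Fo Fm X ` carrier (Fo (wedge3 C X)))"
proof -
  interpret pfx C X Fo Fm
    using assms by unfold_locales auto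
  show ?thesis unfolding T2_def wedge3_def sets_eq ..
qed

end
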